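(* Let $\pi$ be a topological group, $k$ a finite field and $F$ a field. For $i=1,\dots,N$, let $\rho_i:\pi\to\mathrm{GL}(V_i)$ be a finite-dimensional representation over $k$ with finite monodromy group $G_i=\rho_i(\pi)\le\mathrm{GL}(V_i)$, and let $\eta_i:G_i\to\mathrm{GL}(W_i)$ be a nontrivial representation over $F$. Let $\rho=\bigoplus_{i=1}^N(\eta_i\circ\rho_i):\pi\to\prod_{i=1}^N\mathrm{GL}(W_i)$ and $G=\rho(\pi)$. Assume: (1) each $G_i$ is quasisimple, i.e. $G_i$ is perfect and $G_i'=G_i/Z(G_i)$ is simple; (2) for every $i\ne j$, the pair $(G_l'\to\mathrm{PGL}(V_l))_{l=i,j}$ is Goursat-adapted; (3) for every $i\neq j$ there is no isomorphism $\rho_i\cong\chi\otimes\sigma(\rho_j)$ or $\rho_i\cong\chi\otimes D(\sigma(\rho_j))$ with $\chi$ a one-dimensional representation of $\pi$ over $k$ and $\sigma\in\mathrm{Aut}(k)$. Then $G=\prod_{i=1}^N(G_i/\ker\eta_i)$ (i.e. $G$ is as large as possible inside $\prod_i\eta_i(G_i)$).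
   Context: A pair $(G_i\to\mathrm{PGL}(V_i))_{i=1,2}$ of faithful representations over a finite field $k$ is Goursat-adapted if every isomorphism $G_1\cong G_2$ is of the form $X\mapsto A\sigma(X)A^{-1}$ for an isomorphism $A:V_1\to V_2$, or $X\mapsto A\sigma(X)^{-t}A^{-1}$ for an isomorphism $A:V_1^*\to V_2$, with $\sigma\in\mathrm{Aut}(k)$ acting on matrix entries. $G_l'$ is regarded in $\mathrm{PGL}(V_l)$ via the natural map. $\sigma(\rho_j)=\sigma\circ\rho_j$, and $D(\cdot)$ denotes the dual (contragredient) representation. *)

theory Defs
  imports "HOL-Analysis.Product_Topology" "HOL-Algebra.Algebra" "Jordan_Normal_Form.Matrix"
begin

definition topological_group :: "('p, 'b) monoid_scheme \<Rightarrow> 'p topology \<Rightarrow> bool" where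
  "topological_group P T \<longleftrightarrow> group P \<and> topspace T = carrier P
     \<and> continuous_map (prod_topology T T) T (\<lambda>(x, y). x \<otimes>\<^bsub>P\<^esub> y)
     \<and> continuous_map T T (\<lambda>x. inv\<^bsub>P\<^esub> x)"

definition mat_grp :: "nat \<Rightarrow> 'a::field mat set \<Rightarrow> 'a mat monoid" where
  "mat_grp n S = \<lparr>carrier = S, monoid.mult = (*), one = 1\<^sub>m n\<rparr>"

definition GL :: "nat \<Rightarrow> 'a::field mat monoid" where
  "GL n = mat_grp n {A \<in> carrier_mat n n. invertible_mat A}"

text \<open>A finite-dimensional continuous representation of the topological group (P,T) on k^n.
  (Target GL_n(k) carries the discrete topology, as k is finite.)\<close>

definition cont_rep :: "('p, 'b) monoid_scheme \<Rightarrow> 'p topology \<Rightarrow> nat \<Rightarrow> ('p \<Rightarrow> 'a::field mat) \<Rightarrow> bool" where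
  "cont_rep P T n r \<longleftrightarrow> r \<in> hom P (GL n) \<and> continuous_map T (discrete_topology UNIV) r"

text \<open>One-dimensional representations (characters) P -> GL_1(k) = k^*.\<close>

definition cont_char :: "('p, 'b) monoid_scheme \<Rightarrow> 'p topology \<Rightarrow> ('p \<Rightarrow> 'a::field) \<Rightarrow> bool" where
  "cont_char P T c \<longleftrightarrow> (\<forall>g\<in>carrier P. c g \<noteq> 0)
     \<and> (\<forall>g\<in>carrier P. \<forall>h\<in>carrier P. c (g \<otimes>\<^bsub>P\<^esub> h) = c g * c h)
     \<and> continuous_map T (discrete_topology UNIV) c"

definition field_aut :: "('a::field \<Rightarrow> 'a) \<Rightarrow> bool" where
  "field_aut s \<longleftrightarrow> bij s \<and> (\<forall>x y. s (x + y) = s x + s y) \<and> (\<forall>x y. s (x * y) = s x * s y)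
     \<and> s 1 = 1"

definition group_center :: "('a, 'b) monoid_scheme \<Rightarrow> 'a set" where
  "group_center G = {z \<in> carrier G. \<forall>x\<in>carrier G. z \<otimes>\<^bsub>G\<^esub> x = x \<otimes>\<^bsub>G\<^esub> z}"

definition quasisimple :: "('a, 'b) monoid_scheme \<Rightarrow> bool" where
  "quasisimple G \<longleftrightarrow> group G \<and> derived G (carrier G) = carrier G
     \<and> simple_group (G Mod group_center G)"

text \<open>For a finite subgroup S of GL_n(k), the natural map S/Z(S) -> PGL_n(k) is a faithful
  representation iff Z(S) consists exactly of the scalar matrices in S.\<close>

definition proj_faithful :: "nat \<Rightarrow> 'a::field mat set \<Rightarrow> bool" where
  "proj_faithful n S \<longleftrightarrow>
     (\<forall>Y\<in>S. (Y \<in> group_center (mat_grp n S)) \<longleftrightarrow> (\<exists>c. Y = smult_mat c (one_mat n)))"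

text \<open>The pair (S1/Z(S1) -> PGL(k^n1), S2/Z(S2) -> PGL(k^n2)) is Goursat-adapted: both are
  faithful, and every group isomorphism S1/Z(S1) -> S2/Z(S2) is induced (in PGL) by
  X |-> A s(X) A^-1 with A : k^n1 -> k^n2 linear iso, or by X |-> A s(X)^-t A^-1 with
  A : (k^n1)^* -> k^n2 linear iso, s a field automorphism acting entrywise.
  Equality in PGL means equality up to a nonzero scalar.\<close>

definition goursat_adapted :: "nat \<Rightarrow> 'a::field mat set \<Rightarrow> nat \<Rightarrow> 'a mat set \<Rightarrow> bool" where
  "goursat_adapted n1 S1 n2 S2 \<longleftrightarrow>
     proj_faithful n1 S1 \<and> proj_faithful n2 S2 \<and>
     (\<forall>\<phi>. \<phi> \<in> iso (mat_grp n1 S1 Mod group_center (mat_grp n1 S1))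
                   (mat_grp n2 S2 Mod group_center (mat_grp n2 S2)) \<longrightarrow>
        (\<exists>s A. field_aut s \<and> n1 = n2 \<and> A \<in> carrier (GL n2) \<and>
           ((\<forall>M\<in>S1. \<exists>Y\<in>S2. \<exists>c. c \<noteq> 0 \<and>
               \<phi> (group_center (mat_grp n1 S1) #>\<^bsub>mat_grp n1 S1\<^esub> M)
                 = group_center (mat_grp n2 S2) #>\<^bsub>mat_grp n2 S2\<^esub> Y
             \<and> Y = c \<cdot>\<^sub>m (A * map_mat s M * inv\<^bsub>GL n2\<^esub> A))
           \<or>
            (\<forall>M\<in>S1. \<exists>Y\<in>S2. \<exists>c. c \<noteq> 0 \<and>
               \<phi> (group_center (mat_grp n1 S1) #>\<^bsub>mat_grp n1 S1\<^esub> M)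
                 = group_center (mat_grp n2 S2) #>\<^bsub>mat_grp n2 S2\<^esub> Y
             \<and> Y = c \<cdot>\<^sub>m (A * transpose_mat (inv\<^bsub>GL n1\<^esub> (map_mat s M)) * inv\<^bsub>GL n2\<^esub> A)))))"

end

theory Submission
  imports Defs
begin

lemma (in group) center_subgroup: "subgroup (group_center G) G"
proof (rule subgroupI)
  show "group_center G \<subseteq> carrier G" by (auto simp: group_center_def)
  show "group_center G \<noteq> {}" by (auto simp: group_center_def)
next
  fix a assume a: "a \<in> group_center G"
  show "inv a \<in> group_center G"
    unfolding group_center_def
  proof (safe)
    have ac: "a \<in> carrier G" using a by (simp add: group_center_def)
    then show "inv a \<in> carrier G" by simp
    fix x assume x: "x \<in> carrier G"
    have cm: "a \<otimes> x = x \<otimes> a" using a x by (simp add: group_center_def)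
    have "inv a \<otimes> x = inv a \<otimes> (x \<otimes> a) \<otimes> inv a" using ac x by (simp add: m_assoc)
    also have "\<dots> = inv a \<otimes> (a \<otimes> x) \<otimes> inv a" using cm by simp
    also have "\<dots> = x \<otimes> inv a" using ac x by (simp add: m_assoc[symmetric])
    finally show "inv a \<otimes> x = x \<otimes> inv a" .
  qed
next
  fix a b assume a: "a \<in> group_center G" and b: "b \<in> group_center G"
  show "a \<otimes> b \<in> group_center G"
    unfolding group_center_def
  proof (safe)
    have ac: "a \<in> carrier G" "b \<in> carrier G" using a b by (auto simp: group_center_def)
    then show "a \<otimes> b \<in> carrier G" by simp
    fix x assume x: "x \<in> carrier G"
    have cm: "a \<otimes> x = x \<otimes> a" "b \<otimes> x = x \<otimes> b" using a b x by (auto simp: group_center_def)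
    have "a \<otimes> b \<otimes> x = a \<otimes> (b \<otimes> x)" using ac x by (simp add: m_assoc)
    also have "\<dots> = a \<otimes> (x \<otimes> b)" using cm by simp
    also have "\<dots> = (a \<otimes> x) \<otimes> b" using ac x by (simp add: m_assoc)
    also have "\<dots> = x \<otimes> a \<otimes> b" using cm by simp
    finally show "a \<otimes> b \<otimes> x = x \<otimes> (a \<otimes> b)" using ac x by (simp add: m_assoc)
  qed
qed

lemma (in group) center_normal: "group_center G \<lhd> G"
proof (rule normal_invI[OF center_subgroup])
  fix x h assume x: "x \<in> carrier G" and h: "h \<in> group_center G"
  then have "x \<otimes> h = h \<otimes> x" "h \<in> carrier G" by (auto simp: group_center_def)
  then have "x \<otimes> h \<otimes> inv x = h" using x by (simp add: m_assoc)
  then show "x \<otimes> h \<otimes> inv x \<in> group_center G" using h by simp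
qed

lemma (in group) comm_central:
  assumes z: "z \<in> group_center G" and n: "n \<in> carrier G" and y: "y \<in> carrier G"
  shows "(z \<otimes> n) \<otimes> y \<otimes> inv (z \<otimes> n) \<otimes> inv y = n \<otimes> y \<otimes> inv n \<otimes> inv y"
proof -
  have zc: "z \<in> carrier G" and zcomm: "\<And>w. w \<in> carrier G \<Longrightarrow> z \<otimes> w = w \<otimes> z"
    using z by (auto simp: group_center_def)
  have "(z \<otimes> n) \<otimes> y \<otimes> inv (z \<otimes> n) = z \<otimes> (n \<otimes> y \<otimes> inv n) \<otimes> inv z"
    using zc n y by (simp add: inv_mult_group m_assoc)
  also have "\<dots> = n \<otimes> y \<otimes> inv n"
    using zcomm[of "n \<otimes> y \<otimes> inv n"] zc n y by (simp add: m_assoc)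
  finally show ?thesis by simp
qed

lemma (in group) comm_central_one:
  assumes z: "z \<in> group_center G" and y: "y \<in> carrier G"
  shows "z \<otimes> y \<otimes> inv z \<otimes> inv y = \<one>"
proof -
  have zc: "z \<in> carrier G" and "z \<otimes> y = y \<otimes> z"
    using z y by (auto simp: group_center_def)
  then show ?thesis using y by (simp add: m_assoc)
qed

lemma quasisimple_group: "quasisimple G \<Longrightarrow> group G"
  by (simp add: quasisimple_def)

lemma (in group) qs_image:
  assumes qs: "quasisimple G" and N: "N \<lhd> G"
  shows "N \<subseteq> group_center G \<or> (\<forall>x\<in>carrier G. \<exists>z\<in>group_center G. \<exists>n\<in>N. x = z \<otimes> n)"
proof -
  let ?Z = "group_center G"
  interpret Zn: normal ?Z G by (rule center_normal)
  have sg: "simple_group (G Mod ?Z)" using qs by (simp add: quasisimple_def)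
  have gh: "group_hom G (G Mod ?Z) (\<lambda>a. ?Z #> a)"
    by (simp add: group_hom.intro group_hom_axioms.intro Zn.factorgroup_is_group Zn.r_coset_hom_Mod is_group)
  have surj: "(\<lambda>a. ?Z #> a) ` carrier G = carrier (G Mod ?Z)"
    by (simp add: carrier_FactGroup)
  interpret Nn: normal N G by (rule N)
  have "(\<lambda>a. ?Z #> a) ` N \<lhd> G Mod ?Z"
    by (rule Nn.surj_hom_normal_subgroup[OF gh surj])
  then have "(\<lambda>a. ?Z #> a) ` N = carrier (G Mod ?Z) \<or> (\<lambda>a. ?Z #> a) ` N = {\<one>\<^bsub>G Mod ?Z\<^esub>}"
    by (rule simple_group.no_real_normal_subgroup[OF sg])
  then have "(\<lambda>a. ?Z #> a) ` N = carrier (G Mod ?Z) \<or> (\<lambda>a. ?Z #> a) ` N = {?Z}"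
    by simp
  then show ?thesis
  proof
    assume A: "(\<lambda>a. ?Z #> a) ` N = carrier (G Mod ?Z)"
    have "\<exists>z\<in>?Z. \<exists>n\<in>N. x = z \<otimes> n" if x: "x \<in> carrier G" for x
    proof -
      have "?Z #> x \<in> (\<lambda>a. ?Z #> a) ` N" using A surj x by blast
      then obtain n where n: "n \<in> N" "?Z #> x = ?Z #> n" by blast
      have "x \<in> ?Z #> n" using n x rcos_self[OF x Zn.is_subgroup] by simp
      then show ?thesis unfolding r_coset_def using n by blast
    qed
    then show ?thesis by blast
  next
    assume B: "(\<lambda>a. ?Z #> a) ` N = {?Z}"
    have "n \<in> ?Z" if n: "n \<in> N" for n
    proof -
      have "?Z #> n = ?Z" using B n by blast
      moreover have "n \<in> ?Z #> n" using rcos_self[OF _ Zn.is_subgroup] n Nn.subset by blast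
      ultimately show ?thesis by simp
    qed
    then show ?thesis by blast
  qed
qed

lemma (in group) qs_center_proper:
  assumes qs: "quasisimple G"
  shows "group_center G \<noteq> carrier G"
proof
  let ?Z = "group_center G"
  assume E: "?Z = carrier G"
  interpret Zn: normal ?Z G by (rule center_normal)
  have sg: "simple_group (G Mod ?Z)" using qs by (simp add: quasisimple_def)
  have "carrier (G Mod ?Z) = {?Z}"
  proof -
    have "carrier (G Mod ?Z) = (\<lambda>a. ?Z #> a) ` carrier G" by (simp add: carrier_FactGroup)
    also have "\<dots> = {?Z}"
      using E Zn.rcos_const[OF is_group] one_closed by auto
    finally show ?thesis .
  qed
  then show False using simple_group.simple_not_triv[OF sg] by simp
qed

lemma (in group) qs_derived_sub:
  assumes qs: "quasisimple G" and S: "subgroup S G" and D: "derived_set G (carrier G) \<subseteq> S"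
  shows "S = carrier G"
proof -
  have "derived G (carrier G) \<subseteq> S"
    unfolding derived_def by (rule generate_subgroup_incl[OF D S])
  then show ?thesis using qs S subgroup.subset unfolding quasisimple_def by blast
qed

lemma (in group) qs_normal:
  assumes qs: "quasisimple G" and N: "N \<lhd> G"
  shows "N \<subseteq> group_center G \<or> N = carrier G"
proof -
  interpret Nn: normal N G by (rule N)
  have "N = carrier G" if A: "\<forall>x\<in>carrier G. \<exists>z\<in>group_center G. \<exists>n\<in>N. x = z \<otimes> n"
  proof (rule qs_derived_sub[OF qs Nn.is_subgroup], safe)
    fix x y assume x: "x \<in> carrier G" and y: "y \<in> carrier G"
    obtain z n where z: "z \<in> group_center G" and n: "n \<in> N" and xe: "x = z \<otimes> n" using A x by blast
    have nc: "n \<in> carrier G" using n Nn.subset by blast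
    have "x \<otimes> y \<otimes> inv x \<otimes> inv y = n \<otimes> (y \<otimes> inv n \<otimes> inv y)"
      using comm_central[OF z nc y] xe nc y by (simp add: m_assoc)
    moreover have "y \<otimes> inv n \<otimes> inv y \<in> N"
      using normal_invE(2)[OF N y Nn.m_inv_closed[OF n]] by simp
    ultimately show "x \<otimes> y \<otimes> inv x \<otimes> inv y \<in> N" using n Nn.m_closed by simp
  qed
  then show ?thesis using qs_image[OF qs N] by blast
qed

lemma (in group) rcos_eq_iff:
  assumes H: "subgroup H G" and a: "a \<in> carrier G" and b: "b \<in> carrier G"
  shows "(H #> a = H #> b) \<longleftrightarrow> a \<otimes> inv b \<in> H"
proof
  assume "H #> a = H #> b"
  then have "a \<in> H #> b" using rcos_self[OF a H] by simp
  then show "a \<otimes> inv b \<in> H" using subgroup.rcos_module[OF H is_group b a] by simp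
next
  assume "a \<otimes> inv b \<in> H"
  then have "a \<in> H #> b" using subgroup.rcos_module[OF H is_group b a] by simp
  then show "H #> a = H #> b" using repr_independence[OF _ b H] by simp
qed

lemma goursat_wd:
  assumes P: "group P" and q1: "quasisimple G1" and q2: "quasisimple G2"
    and h1: "group_hom P G1 r1" and h2: "group_hom P G2 r2"
    and s2: "r2 ` carrier P = carrier G2"
    and K: "kernel P G1 r1 \<subseteq> K1" and c: "r2 ` K1 \<subseteq> group_center G2"
    and x: "x \<in> carrier P" and rx: "r1 x \<in> group_center G1"
  shows "r2 x \<in> group_center G2"
proof -
  define XX where "XX = {y \<in> carrier P. r1 y \<in> group_center G1}"
  have G1: "group G1" and G2: "group G2" using q1 q2 by (simp_all add: quasisimple_def)
  note hm1 = group_hom.hom_mult[OF h1] group_hom.hom_inv[OF h1] group_hom.hom_one[OF h1]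
  note hm2 = group_hom.hom_mult[OF h2] group_hom.hom_inv[OF h2] group_hom.hom_one[OF h2]
  note Pc = group.inv_closed[OF P] monoid.m_closed[OF group.is_monoid[OF P]]
  have Zs: "subgroup (group_center G1) G1" by (rule group.center_subgroup[OF G1])
  have XXsub: "subgroup XX P"
  proof (rule group.subgroupI[OF P])
    show "XX \<subseteq> carrier P" by (auto simp: XX_def)
    show "XX \<noteq> {}" using subgroup.one_closed[OF Zs] group.is_monoid[OF P]
      by (auto simp: XX_def hm1 intro!: exI[of _ "\<one>\<^bsub>P\<^esub>"])
    fix a b assume a: "a \<in> XX" and b: "b \<in> XX"
    then show "inv\<^bsub>P\<^esub> a \<in> XX" by (auto simp: XX_def subgroup.m_inv_closed[OF Zs] hm1 Pc)
    show "a \<otimes>\<^bsub>P\<^esub> b \<in> XX" using a b by (auto simp: XX_def subgroup.m_closed[OF Zs] hm1 Pc)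
  qed
  have XXn: "XX \<lhd> P"
  proof (rule group.normal_invI[OF P XXsub])
    fix g h assume g: "g \<in> carrier P" and h: "h \<in> XX"
    then have "r1 g \<otimes>\<^bsub>G1\<^esub> r1 h \<otimes>\<^bsub>G1\<^esub> inv\<^bsub>G1\<^esub> r1 g \<in> group_center G1"
      using group.normal_invE(2)[OF G1 group.center_normal[OF G1]] group_hom.hom_closed[OF h1]
      by (auto simp: XX_def)
    then show "g \<otimes>\<^bsub>P\<^esub> h \<otimes>\<^bsub>P\<^esub> inv\<^bsub>P\<^esub> g \<in> XX"
      using g h by (auto simp: XX_def hm1 Pc)
  qed
  have "r2 ` XX \<lhd> G2" by (rule normal.surj_hom_normal_subgroup[OF XXn h2 s2])
  then have "r2 ` XX \<subseteq> group_center G2 \<or> r2 ` XX = carrier G2"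
    by (rule group.qs_normal[OF G2 q2])
  moreover have "r2 ` XX \<noteq> carrier G2"
  proof
    assume A: "r2 ` XX = carrier G2"
    have "derived_set G2 (carrier G2) \<subseteq> group_center G2"
    proof (safe)
      fix a b assume a: "a \<in> carrier G2" and b: "b \<in> carrier G2"
      obtain u where u: "u \<in> XX" "a = r2 u" using A a by blast
      obtain v where v: "v \<in> carrier P" "b = r2 v" using s2 b by blast
      have uc: "u \<in> carrier P" using u by (simp add: XX_def)
      let ?c = "u \<otimes>\<^bsub>P\<^esub> v \<otimes>\<^bsub>P\<^esub> inv\<^bsub>P\<^esub> u \<otimes>\<^bsub>P\<^esub> inv\<^bsub>P\<^esub> v"
      have cc: "?c \<in> carrier P" using uc v by (simp add: Pc)
      have "r1 ?c = r1 u \<otimes>\<^bsub>G1\<^esub> r1 v \<otimes>\<^bsub>G1\<^esub> inv\<^bsub>G1\<^esub> r1 u \<otimes>\<^bsub>G1\<^esub> inv\<^bsub>G1\<^esub> r1 v"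
        using uc v by (simp add: hm1 Pc)
      also have "\<dots> = \<one>\<^bsub>G1\<^esub>"
        using group.comm_central_one[OF G1, of "r1 u" "r1 v"] u v group_hom.hom_closed[OF h1]
        by (auto simp: XX_def)
      finally have "?c \<in> kernel P G1 r1" using cc by (simp add: kernel_def)
      then have "r2 ?c \<in> group_center G2" using K c by blast
      moreover have "r2 ?c = a \<otimes>\<^bsub>G2\<^esub> b \<otimes>\<^bsub>G2\<^esub> inv\<^bsub>G2\<^esub> a \<otimes>\<^bsub>G2\<^esub> inv\<^bsub>G2\<^esub> b"
        using uc v u by (simp add: hm2 Pc)
      ultimately show "a \<otimes>\<^bsub>G2\<^esub> b \<otimes>\<^bsub>G2\<^esub> inv\<^bsub>G2\<^esub> a \<otimes>\<^bsub>G2\<^esub> inv\<^bsub>G2\<^esub> b \<in> group_center G2" by simp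
    qed
    then have "group_center G2 = carrier G2"
      by (rule group.qs_derived_sub[OF G2 q2 group.center_subgroup[OF G2]])
    then show False using group.qs_center_proper[OF G2 q2] by simp
  qed
  ultimately have "r2 ` XX \<subseteq> group_center G2" by simp
  then show ?thesis using x rx by (auto simp: XX_def)
qed

lemma goursat_iso:
  assumes P: "group P" and q1: "quasisimple G1" and q2: "quasisimple G2"
    and h1: "group_hom P G1 r1" and h2: "group_hom P G2 r2"
    and s1: "r1 ` carrier P = carrier G1" and s2: "r2 ` carrier P = carrier G2"
    and K1: "kernel P G1 r1 \<subseteq> K1" and c1: "r2 ` K1 \<subseteq> group_center G2"
    and K2: "kernel P G2 r2 \<subseteq> K2" and c2: "r1 ` K2 \<subseteq> group_center G1"
  shows "\<exists>\<phi>. \<phi> \<in> iso (G1 Mod group_center G1) (G2 Mod group_center G2) \<and>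
     (\<forall>g\<in>carrier P. \<phi> (group_center G1 #>\<^bsub>G1\<^esub> r1 g) = group_center G2 #>\<^bsub>G2\<^esub> r2 g)"
proof -
  let ?Z1 = "group_center G1" and ?Z2 = "group_center G2"
  have G1: "group G1" and G2: "group G2" using q1 q2 by (simp_all add: quasisimple_def)
  note hm1 = group_hom.hom_mult[OF h1] group_hom.hom_inv[OF h1] group_hom.hom_one[OF h1] group_hom.hom_closed[OF h1]
  note hm2 = group_hom.hom_mult[OF h2] group_hom.hom_inv[OF h2] group_hom.hom_one[OF h2] group_hom.hom_closed[OF h2]
  note Pc = group.inv_closed[OF P] monoid.m_closed[OF group.is_monoid[OF P]]
  have Zs1: "subgroup ?Z1 G1" by (rule group.center_subgroup[OF G1])
  have Zs2: "subgroup ?Z2 G2" by (rule group.center_subgroup[OF G2])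
  have Zn1: "?Z1 \<lhd> G1" by (rule group.center_normal[OF G1])
  have Zn2: "?Z2 \<lhd> G2" by (rule group.center_normal[OF G2])
  have key: "(?Z1 #>\<^bsub>G1\<^esub> r1 g = ?Z1 #>\<^bsub>G1\<^esub> r1 g') \<longleftrightarrow> (?Z2 #>\<^bsub>G2\<^esub> r2 g = ?Z2 #>\<^bsub>G2\<^esub> r2 g')"
    if g: "g \<in> carrier P" and g': "g' \<in> carrier P" for g g'
  proof -
    have e1: "(?Z1 #>\<^bsub>G1\<^esub> r1 g = ?Z1 #>\<^bsub>G1\<^esub> r1 g') \<longleftrightarrow> r1 (g \<otimes>\<^bsub>P\<^esub> inv\<^bsub>P\<^esub> g') \<in> ?Z1"
      using group.rcos_eq_iff[OF G1 Zs1, of "r1 g" "r1 g'"] g g' by (simp add: hm1 Pc)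
    have e2: "(?Z2 #>\<^bsub>G2\<^esub> r2 g = ?Z2 #>\<^bsub>G2\<^esub> r2 g') \<longleftrightarrow> r2 (g \<otimes>\<^bsub>P\<^esub> inv\<^bsub>P\<^esub> g') \<in> ?Z2"
      using group.rcos_eq_iff[OF G2 Zs2, of "r2 g" "r2 g'"] g g' by (simp add: hm2 Pc)
    show ?thesis unfolding e1 e2
      using goursat_wd[OF P q1 q2 h1 h2 s2 K1 c1, of "g \<otimes>\<^bsub>P\<^esub> inv\<^bsub>P\<^esub> g'"]
        goursat_wd[OF P q2 q1 h2 h1 s1 K2 c2, of "g \<otimes>\<^bsub>P\<^esub> inv\<^bsub>P\<^esub> g'"] g g'
      by (auto simp: Pc)
  qed
  define \<phi> where "\<phi> C = ?Z2 #>\<^bsub>G2\<^esub> r2 (SOME g. g \<in> carrier P \<and> C = ?Z1 #>\<^bsub>G1\<^esub> r1 g)" for C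
  have phi: "\<phi> (?Z1 #>\<^bsub>G1\<^esub> r1 g) = ?Z2 #>\<^bsub>G2\<^esub> r2 g" if g: "g \<in> carrier P" for g
  proof -
    have "\<exists>g'. g' \<in> carrier P \<and> ?Z1 #>\<^bsub>G1\<^esub> r1 g = ?Z1 #>\<^bsub>G1\<^esub> r1 g'" using g by blast
    then have "(SOME g'. g' \<in> carrier P \<and> ?Z1 #>\<^bsub>G1\<^esub> r1 g = ?Z1 #>\<^bsub>G1\<^esub> r1 g') \<in> carrier P \<and>
       ?Z1 #>\<^bsub>G1\<^esub> r1 g = ?Z1 #>\<^bsub>G1\<^esub> r1 (SOME g'. g' \<in> carrier P \<and> ?Z1 #>\<^bsub>G1\<^esub> r1 g = ?Z1 #>\<^bsub>G1\<^esub> r1 g')"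
      by (rule someI_ex)
    then show ?thesis using key g unfolding \<phi>_def by metis
  qed
  have car1: "carrier (G1 Mod ?Z1) = (\<lambda>g. ?Z1 #>\<^bsub>G1\<^esub> r1 g) ` carrier P"
    unfolding carrier_FactGroup s1[symmetric] by (simp add: image_image)
  have car2: "carrier (G2 Mod ?Z2) = (\<lambda>g. ?Z2 #>\<^bsub>G2\<^esub> r2 g) ` carrier P"
    unfolding carrier_FactGroup s2[symmetric] by (simp add: image_image)
  have hom: "\<phi> \<in> hom (G1 Mod ?Z1) (G2 Mod ?Z2)"
  proof (rule homI)
    fix C assume "C \<in> carrier (G1 Mod ?Z1)"
    then obtain g where g: "g \<in> carrier P" "C = ?Z1 #>\<^bsub>G1\<^esub> r1 g" unfolding car1 by blast
    then have "\<phi> C = ?Z2 #>\<^bsub>G2\<^esub> r2 g" using phi by simp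
    then show "\<phi> C \<in> carrier (G2 Mod ?Z2)" unfolding car2 using g by blast
  next
    fix C D assume "C \<in> carrier (G1 Mod ?Z1)" "D \<in> carrier (G1 Mod ?Z1)"
    then obtain g h where g: "g \<in> carrier P" "C = ?Z1 #>\<^bsub>G1\<^esub> r1 g"
      and h: "h \<in> carrier P" "D = ?Z1 #>\<^bsub>G1\<^esub> r1 h" unfolding car1 by blast
    have "C \<otimes>\<^bsub>G1 Mod ?Z1\<^esub> D = ?Z1 #>\<^bsub>G1\<^esub> r1 (g \<otimes>\<^bsub>P\<^esub> h)"
      using g h normal.rcos_sum[OF Zn1, of "r1 g" "r1 h"] by (simp add: hm1)
    then have "\<phi> (C \<otimes>\<^bsub>G1 Mod ?Z1\<^esub> D) = ?Z2 #>\<^bsub>G2\<^esub> r2 (g \<otimes>\<^bsub>P\<^esub> h)"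
      using phi g h Pc by simp
    also have "\<dots> = \<phi> C \<otimes>\<^bsub>G2 Mod ?Z2\<^esub> \<phi> D"
      using g h normal.rcos_sum[OF Zn2, of "r2 g" "r2 h"] phi by (simp add: hm2)
    finally show "\<phi> (C \<otimes>\<^bsub>G1 Mod ?Z1\<^esub> D) = \<phi> C \<otimes>\<^bsub>G2 Mod ?Z2\<^esub> \<phi> D" .
  qed
  have bij: "bij_betw \<phi> (carrier (G1 Mod ?Z1)) (carrier (G2 Mod ?Z2))"
  proof (rule bij_betw_imageI)
    show "inj_on \<phi> (carrier (G1 Mod ?Z1))"
    proof (rule inj_onI)
      fix C D assume "C \<in> carrier (G1 Mod ?Z1)" "D \<in> carrier (G1 Mod ?Z1)" and e: "\<phi> C = \<phi> D"
      then obtain g h where g: "g \<in> carrier P" "C = ?Z1 #>\<^bsub>G1\<^esub> r1 g"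
        and h: "h \<in> carrier P" "D = ?Z1 #>\<^bsub>G1\<^esub> r1 h" unfolding car1 by blast
      then show "C = D" using e phi key by auto
    qed
    show "\<phi> ` carrier (G1 Mod ?Z1) = carrier (G2 Mod ?Z2)"
      unfolding car1 car2 using phi by (auto simp: image_iff)
  qed
  show ?thesis using hom bij phi by (auto simp: iso_def)
qed

lemma (in group) carrier_normal: "carrier G \<lhd> G"
  by (rule normal_invI) (auto intro: subgroup_self)

lemma ribet_step:
  fixes P :: "('p,'x) monoid_scheme" and Hg :: "'i \<Rightarrow> ('b,'y) monoid_scheme" and f :: "'i \<Rightarrow> 'p \<Rightarrow> 'b"
  assumes P: "group P" and hom: "\<forall>i\<in>I. group_hom P (Hg i) (f i)"
    and pair: "\<forall>i\<in>I. \<forall>j\<in>I. i \<noteq> j \<longrightarrow> f i ` kernel P (Hg j) (f j) = f i ` carrier P"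
    and perf: "\<forall>j\<in>I. \<forall>K1 K2. K1 \<lhd> P \<longrightarrow> K2 \<lhd> P \<longrightarrow> f j ` K1 = f j ` carrier P
                 \<longrightarrow> f j ` K2 = f j ` carrier P \<longrightarrow> f j ` (K1 \<inter> K2) = f j ` carrier P"
    and J: "finite J" and j: "j \<in> I" and JI: "J \<subseteq> I - {j}"
  shows "carrier P \<inter> (\<Inter>i\<in>J. kernel P (Hg i) (f i)) \<lhd> P \<and>
         f j ` (carrier P \<inter> (\<Inter>i\<in>J. kernel P (Hg i) (f i))) = f j ` carrier P"
  using J JI
proof (induction J rule: finite_induct)
  case empty
  then show ?case using group.carrier_normal[OF P] by simp
next
  case (insert k J)
  then have IH: "carrier P \<inter> (\<Inter>i\<in>J. kernel P (Hg i) (f i)) \<lhd> P"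
    "f j ` (carrier P \<inter> (\<Inter>i\<in>J. kernel P (Hg i) (f i))) = f j ` carrier P" by auto
  have k: "k \<in> I" "k \<noteq> j" using insert by auto
  have kn: "kernel P (Hg k) (f k) \<lhd> P" using hom k by (simp add: group_hom.normal_kernel)
  have eq: "carrier P \<inter> (\<Inter>i\<in>insert k J. kernel P (Hg i) (f i))
      = (carrier P \<inter> (\<Inter>i\<in>J. kernel P (Hg i) (f i))) \<inter> kernel P (Hg k) (f k)" by auto
  have "f j ` kernel P (Hg k) (f k) = f j ` carrier P" using pair j k by auto
  then show ?case unfolding eq
    using group.normal_subgroup_intersect[OF P IH(1) kn] perf j IH(2) kn IH(1) by blast
qed

lemma ribet:
  fixes P :: "('p,'x) monoid_scheme" and Hg :: "'i \<Rightarrow> ('b,'y) monoid_scheme" and f :: "'i \<Rightarrow> 'p \<Rightarrow> 'b"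
  assumes P: "group P" and fin: "finite I" and hom: "\<forall>i\<in>I. group_hom P (Hg i) (f i)"
    and pair: "\<forall>i\<in>I. \<forall>j\<in>I. i \<noteq> j \<longrightarrow> f i ` kernel P (Hg j) (f j) = f i ` carrier P"
    and perf: "\<forall>j\<in>I. \<forall>K1 K2. K1 \<lhd> P \<longrightarrow> K2 \<lhd> P \<longrightarrow> f j ` K1 = f j ` carrier P
                 \<longrightarrow> f j ` K2 = f j ` carrier P \<longrightarrow> f j ` (K1 \<inter> K2) = f j ` carrier P"
    and a: "\<forall>i\<in>I. a i \<in> f i ` carrier P"
  shows "\<exists>g\<in>carrier P. \<forall>i\<in>I. f i g = a i"
proof -
  have main: "\<exists>g\<in>carrier P. (\<forall>i\<in>J. f i g = a i) \<and> (\<forall>i\<in>I - J. f i g = \<one>\<^bsub>Hg i\<^esub>)"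
    if "J \<subseteq> I" for J
  proof -
    have "finite J" using that fin finite_subset by blast
    then show ?thesis using that
    proof (induction J rule: finite_induct)
      case empty
      show ?case using hom group.is_monoid[OF P]
        by (intro bexI[of _ "\<one>\<^bsub>P\<^esub>"]) (auto simp: group_hom.hom_one)
    next
      case (insert k J)
      then obtain g where g: "g \<in> carrier P" "\<forall>i\<in>J. f i g = a i" "\<forall>i\<in>I - J. f i g = \<one>\<^bsub>Hg i\<^esub>" by auto
      have k: "k \<in> I" "k \<notin> J" using insert by auto
      have "f k ` (carrier P \<inter> (\<Inter>i\<in>I - {k}. kernel P (Hg i) (f i))) = f k ` carrier P"
        using ribet_step[OF P hom pair perf _ k(1), of "I - {k}"] fin by auto
      moreover have "a k \<in> f k ` carrier P" using a k by blast
      ultimately have "a k \<in> f k ` (carrier P \<inter> (\<Inter>i\<in>I - {k}. kernel P (Hg i) (f i)))" by simp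
      then obtain h where h0: "a k = f k h" "h \<in> carrier P \<inter> (\<Inter>i\<in>I - {k}. kernel P (Hg i) (f i))"
        by (rule imageE)
      then have h: "h \<in> carrier P" "\<forall>i\<in>I - {k}. f i h = \<one>\<^bsub>Hg i\<^esub>" "f k h = a k"
        by (auto simp: kernel_def)
      have "\<forall>i\<in>insert k J. f i (g \<otimes>\<^bsub>P\<^esub> h) = a i"
      proof
        fix i assume i: "i \<in> insert k J"
        have gh: "group_hom P (Hg i) (f i)" using hom i insert by auto
        have e: "f i (g \<otimes>\<^bsub>P\<^esub> h) = f i g \<otimes>\<^bsub>Hg i\<^esub> f i h"
          using group_hom.hom_mult[OF gh g(1) h(1)] .
        show "f i (g \<otimes>\<^bsub>P\<^esub> h) = a i"
        proof (cases "i = k")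
          case True
          then show ?thesis using e g h k group_hom.hom_closed[OF gh h(1)]
              monoid.l_one[OF group.is_monoid[OF group_hom.axioms(2)[OF gh]]]
            by simp
        next
          case False
          then have "i \<in> J" "i \<in> I - {k}" using i insert by auto
          then show ?thesis using e g h group_hom.hom_closed[OF gh g(1)]
            by (simp add: group.is_monoid[OF group_hom.axioms(2)[OF gh]])
        qed
      qed
      moreover have "\<forall>i\<in>I - insert k J. f i (g \<otimes>\<^bsub>P\<^esub> h) = \<one>\<^bsub>Hg i\<^esub>"
      proof
        fix i assume i: "i \<in> I - insert k J"
        have gh: "group_hom P (Hg i) (f i)" using hom i by auto
        show "f i (g \<otimes>\<^bsub>P\<^esub> h) = \<one>\<^bsub>Hg i\<^esub>"
          using group_hom.hom_mult[OF gh g(1) h(1)] g h i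
          by (simp add: group.is_monoid[OF group_hom.axioms(2)[OF gh]])
      qed
      moreover have "g \<otimes>\<^bsub>P\<^esub> h \<in> carrier P" using g h monoid.m_closed[OF group.is_monoid[OF P]] by blast
      ultimately show ?case by blast
    qed
  qed
  show ?thesis using main[of I] by auto
qed

lemma inverts_carrier:
  assumes A: "A \<in> carrier_mat n n" and AB: "inverts_mat A B" and BA: "inverts_mat B A"
  shows "B \<in> carrier_mat n n"
  using AB BA A unfolding inverts_mat_def
  by (metis carrier_matD(1) carrier_matD(2) carrier_mat_triv index_mult_mat(3) index_one_mat(3))

lemma GL_carrier: "carrier (GL n) = {A \<in> carrier_mat n n. invertible_mat A}"
  by (simp add: GL_def mat_grp_def)

lemma GL_mult [simp]: "A \<otimes>\<^bsub>GL n\<^esub> B = A * B"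
  by (simp add: GL_def mat_grp_def)

lemma GL_one [simp]: "\<one>\<^bsub>GL n\<^esub> = 1\<^sub>m n"
  by (simp add: GL_def mat_grp_def)

lemma mat_grp_mult [simp]: "A \<otimes>\<^bsub>mat_grp n S\<^esub> B = A * B"
  by (simp add: mat_grp_def)

lemma mat_grp_one [simp]: "\<one>\<^bsub>mat_grp n S\<^esub> = 1\<^sub>m n"
  by (simp add: mat_grp_def)

lemma mat_grp_carrier [simp]: "carrier (mat_grp n S) = S"
  by (simp add: mat_grp_def)

lemma mat_grp_GL: "mat_grp n S = (GL n)\<lparr>carrier := S\<rparr>"
  by (simp add: GL_def mat_grp_def)

lemma GL_group: "group (GL (n::nat) :: 'a::field mat monoid)"
proof (rule groupI)
  fix x y assume x: "x \<in> carrier (GL n :: 'a mat monoid)" and y: "y \<in> carrier (GL n :: 'a mat monoid)"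
  have xc: "x \<in> carrier_mat n n" and yc: "y \<in> carrier_mat n n" using x y by (auto simp: GL_carrier)
  obtain x' where x1: "inverts_mat x x'" and x2: "inverts_mat x' x"
    using x by (auto simp: GL_carrier invertible_mat_def)
  obtain y' where y1: "inverts_mat y y'" and y2: "inverts_mat y' y"
    using y by (auto simp: GL_carrier invertible_mat_def)
  have x'c: "x' \<in> carrier_mat n n" by (rule inverts_carrier[OF xc x1 x2])
  have y'c: "y' \<in> carrier_mat n n" by (rule inverts_carrier[OF yc y1 y2])
  have xx': "x * x' = 1\<^sub>m n" "x' * x = 1\<^sub>m n" using x1 x2 xc x'c by (auto simp: inverts_mat_def)
  have yy': "y * y' = 1\<^sub>m n" "y' * y = 1\<^sub>m n" using y1 y2 yc y'c by (auto simp: inverts_mat_def)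
  have "x * y * (y' * x') = x * (y * y') * x'"
    using xc yc x'c y'c by (simp add: assoc_mult_mat[of _ n n _ n _ n])
  also have "\<dots> = 1\<^sub>m n" using xx' yy' xc x'c by simp
  finally have e1: "x * y * (y' * x') = 1\<^sub>m n" .
  have "y' * x' * (x * y) = y' * (x' * x) * y"
    using xc yc x'c y'c by (simp add: assoc_mult_mat[of _ n n _ n _ n])
  also have "\<dots> = 1\<^sub>m n" using xx' yy' yc y'c by simp
  finally have e2: "y' * x' * (x * y) = 1\<^sub>m n" .
  show "x \<otimes>\<^bsub>GL n\<^esub> y \<in> carrier (GL n)"
    using e1 e2 xc yc x'c y'c
    by (auto simp: GL_carrier invertible_mat_def inverts_mat_def intro!: exI[of _ "y' * x'"])
next
  show "\<one>\<^bsub>GL n\<^esub> \<in> carrier (GL n :: 'a mat monoid)"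
    by (auto simp: GL_carrier invertible_mat_def inverts_mat_def intro!: exI[of _ "1\<^sub>m n"])
next
  fix x y z assume "x \<in> carrier (GL n :: 'a mat monoid)" "y \<in> carrier (GL n :: 'a mat monoid)" "z \<in> carrier (GL n :: 'a mat monoid)"
  then show "x \<otimes>\<^bsub>GL n\<^esub> y \<otimes>\<^bsub>GL n\<^esub> z = x \<otimes>\<^bsub>GL n\<^esub> (y \<otimes>\<^bsub>GL n\<^esub> z)"
    by (auto simp: GL_carrier assoc_mult_mat[of _ n n _ n _ n])
next
  fix x assume "x \<in> carrier (GL n :: 'a mat monoid)"
  then show "\<one>\<^bsub>GL n\<^esub> \<otimes>\<^bsub>GL n\<^esub> x = x" by (auto simp: GL_carrier)
next
  fix x assume x: "x \<in> carrier (GL n :: 'a mat monoid)"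
  have xc: "x \<in> carrier_mat n n" using x by (auto simp: GL_carrier)
  obtain x' where x1: "inverts_mat x x'" and x2: "inverts_mat x' x"
    using x by (auto simp: GL_carrier invertible_mat_def)
  have x'c: "x' \<in> carrier_mat n n" by (rule inverts_carrier[OF xc x1 x2])
  have "x' \<in> carrier (GL n)" "x' \<otimes>\<^bsub>GL n\<^esub> x = \<one>\<^bsub>GL n\<^esub>"
    using x1 x2 xc x'c by (auto simp: GL_carrier invertible_mat_def inverts_mat_def)
  then show "\<exists>y\<in>carrier (GL n). y \<otimes>\<^bsub>GL n\<^esub> x = \<one>\<^bsub>GL n\<^esub>" by blast
qed

lemma fa_zero: "field_aut s \<Longrightarrow> s 0 = 0"
proof -
  assume fa: "field_aut s"
  have "s 0 = s 0 + s 0" using fa by (metis add.right_neutral field_aut_def)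
  then show "s 0 = 0" by (metis add.right_neutral add_left_cancel)
qed

lemma fa_sum: "field_aut s \<Longrightarrow> s (sum f A) = sum (\<lambda>x. s (f x)) A"
proof (induction A rule: infinite_finite_induct)
  case (infinite A) then show ?case by (simp add: fa_zero)
next
  case empty then show ?case by (simp add: fa_zero)
next
  case (insert x F) then show ?case by (simp add: field_aut_def)
qed

lemma fa_mult: "field_aut s \<Longrightarrow> s (x * y) = s x * s y"
  by (simp add: field_aut_def)

lemma map_mat_mult:
  assumes fa: "field_aut s" and A: "A \<in> carrier_mat nr n" and B: "B \<in> carrier_mat n nc"
  shows "map_mat s (A * B) = map_mat s A * map_mat s B"
proof (rule eq_matI)
  fix i j assume i: "i < dim_row (map_mat s A * map_mat s B)" and j: "j < dim_col (map_mat s A * map_mat s B)"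
  then have i': "i < nr" and j': "j < nc" using A B by auto
  show "map_mat s (A * B) $$ (i, j) = (map_mat s A * map_mat s B) $$ (i, j)"
    using A B i' j' by (simp add: scalar_prod_def fa_sum[OF fa] fa_mult[OF fa])
qed (use A B in auto)

lemma map_mat_one: "field_aut s \<Longrightarrow> map_mat s (1\<^sub>m n) = 1\<^sub>m n"
  by (rule eq_matI) (auto simp: field_aut_def fa_zero)

lemma map_mat_GL:
  assumes fa: "field_aut s" and M: "M \<in> carrier (GL n)"
  shows "map_mat s M \<in> carrier (GL n)"
proof -
  have Mc: "M \<in> carrier_mat n n" using M by (simp add: GL_carrier)
  obtain M' where M1: "inverts_mat M M'" and M2: "inverts_mat M' M"
    using M by (auto simp: GL_carrier invertible_mat_def)
  have M'c: "M' \<in> carrier_mat n n" by (rule inverts_carrier[OF Mc M1 M2])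
  have MM: "M * M' = 1\<^sub>m n" "M' * M = 1\<^sub>m n" using M1 M2 Mc M'c by (auto simp: inverts_mat_def)
  have "map_mat s M * map_mat s M' = 1\<^sub>m n"
    using map_mat_mult[OF fa Mc M'c] MM map_mat_one[OF fa] by simp
  moreover have "map_mat s M' * map_mat s M = 1\<^sub>m n"
    using map_mat_mult[OF fa M'c Mc] MM map_mat_one[OF fa] by simp
  ultimately have "map_mat s M * map_mat s M' = 1\<^sub>m n" "map_mat s M' * map_mat s M = 1\<^sub>m n" .
  then show ?thesis using Mc M'c
    by (auto simp: GL_carrier invertible_mat_def inverts_mat_def intro!: exI[of _ "map_mat s M'"])
qed

lemma disc_cont2:
  assumes "continuous_map T (discrete_topology UNIV) r1" "continuous_map T (discrete_topology UNIV) r2"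
  shows "continuous_map T (discrete_topology UNIV) (\<lambda>g. F (r1 g) (r2 g))"
proof -
  have "continuous_map T (prod_topology (discrete_topology UNIV) (discrete_topology UNIV)) (\<lambda>g. (r1 g, r2 g))"
    using assms by (rule continuous_map_pairedI)
  then have c: "continuous_map T (discrete_topology UNIV) (\<lambda>g. (r1 g, r2 g))"
    by (simp add: prod_topology_discrete_topology[symmetric])
  have "continuous_map (discrete_topology UNIV) (discrete_topology UNIV) (case_prod F)" by simp
  from continuous_map_compose[OF c this] show ?thesis by (simp add: o_def)
qed

lemma GL_nonzero:
  assumes n: "n > 0" and Y: "Y \<in> carrier (GL n)" and W: "W \<in> carrier_mat n n" and e: "Y = c \<cdot>\<^sub>m W"
  shows "W \<noteq> 0\<^sub>m n n"
proof
  assume W0: "W = 0\<^sub>m n n"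
  have Yc: "Y \<in> carrier_mat n n" using Y by (simp add: GL_carrier)
  obtain B where B1: "inverts_mat Y B" and B2: "inverts_mat B Y" using Y by (auto simp: GL_carrier invertible_mat_def)
  have Bc: "B \<in> carrier_mat n n" by (rule inverts_carrier[OF Yc B1 B2])
  have "Y = 0\<^sub>m n n" using e W0 by simp
  then have "Y * B = 0\<^sub>m n n" using Bc by simp
  moreover have "Y * B = 1\<^sub>m n" using B1 Yc by (simp add: inverts_mat_def)
  ultimately have "(0\<^sub>m n n :: 'a mat) $$ (0,0) = (1\<^sub>m n :: 'a mat) $$ (0,0)" by simp
  then show False using n by simp
qed

lemma smult_cancel:
  assumes W: "W \<in> carrier_mat n n" and nz: "W \<noteq> 0\<^sub>m n n" and e: "c \<cdot>\<^sub>m W = d \<cdot>\<^sub>m W"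
  shows "c = (d::'a::field)"
proof -
  obtain i j where ij: "i < n" "j < n" "W $$ (i,j) \<noteq> 0"
    using nz W by (metis (no_types, lifting) carrier_matD(1,2) eq_matI index_zero_mat(1,2,3))
  have "(c \<cdot>\<^sub>m W) $$ (i,j) = (d \<cdot>\<^sub>m W) $$ (i,j)" using e by simp
  then have "c * W $$ (i,j) = d * W $$ (i,j)" using ij W by simp
  then show ?thesis using ij(3) by simp
qed

lemma smult_smult_mat: "c \<cdot>\<^sub>m (d \<cdot>\<^sub>m W) = (c * d) \<cdot>\<^sub>m (W :: 'a::comm_ring_1 mat)"
  by (rule eq_matI) (auto simp: mult.assoc)

lemma twist:
  fixes P :: "'p monoid" and T :: "'p topology" and r2 b :: "'p \<Rightarrow> 'k::field mat"
    and r1 :: "'p \<Rightarrow> 'm" and F :: "'m \<Rightarrow> 'k mat"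
  assumes n: "n > 0" and A: "A \<in> carrier (GL n)"
    and top: "topspace T = carrier P"
    and r2c: "\<forall>g\<in>carrier P. r2 g \<in> carrier (GL n)"
    and bc: "\<forall>g\<in>carrier P. b g \<in> carrier_mat n n"
    and closed: "\<forall>g\<in>carrier P. \<forall>h\<in>carrier P. g \<otimes>\<^bsub>P\<^esub> h \<in> carrier P"
    and r2m: "\<forall>g\<in>carrier P. \<forall>h\<in>carrier P. r2 (g \<otimes>\<^bsub>P\<^esub> h) = r2 g * r2 h"
    and bm: "\<forall>g\<in>carrier P. \<forall>h\<in>carrier P. b (g \<otimes>\<^bsub>P\<^esub> h) = b g * b h"
    and bF: "\<forall>g\<in>carrier P. b g = F (r1 g)"
    and c1: "continuous_map T (discrete_topology UNIV) r1"
    and c2: "continuous_map T (discrete_topology UNIV) r2"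
    and eq: "\<forall>g\<in>carrier P. \<exists>c. c \<noteq> 0 \<and> r2 g = c \<cdot>\<^sub>m (A * b g * inv\<^bsub>GL n\<^esub> A)"
  shows "\<exists>\<chi>. cont_char P T \<chi> \<and> (\<forall>g\<in>carrier P. inv\<^bsub>GL n\<^esub> A * r2 g = (\<chi> g \<cdot>\<^sub>m b g) * inv\<^bsub>GL n\<^esub> A)"
proof -
  define Ai where "Ai = inv\<^bsub>GL n\<^esub> A"
  have GLg: "group (GL n :: 'k mat monoid)" by (rule GL_group)
  have Aic: "Ai \<in> carrier (GL n)" unfolding Ai_def using group.inv_closed[OF GLg A] .
  have Ac: "A \<in> carrier_mat n n" and Aic': "Ai \<in> carrier_mat n n" using A Aic by (auto simp: GL_carrier)
  have AAi: "A * Ai = 1\<^sub>m n" using group.r_inv[OF GLg A] unfolding Ai_def by simp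
  have AiA: "Ai * A = 1\<^sub>m n" using group.l_inv[OF GLg A] unfolding Ai_def by simp
  have canc: "Ai * (A * Z) = Z" if "Z \<in> carrier_mat n k" for Z k
  proof -
    have "Ai * (A * Z) = (Ai * A) * Z" using Ac Aic' that by (simp add: assoc_mult_mat[of _ n n _ n _ k])
    then show ?thesis using AiA that by simp
  qed
  define \<Phi> where "\<Phi> M Y = (SOME c. c \<noteq> 0 \<and> Y = c \<cdot>\<^sub>m (A * F M * Ai))" for M Y
  define \<chi> where "\<chi> g = \<Phi> (r1 g) (r2 g)" for g
  have chi: "\<chi> g \<noteq> 0 \<and> r2 g = \<chi> g \<cdot>\<^sub>m (A * b g * Ai)" if g: "g \<in> carrier P" for g
  proof -
    have "\<exists>c. c \<noteq> 0 \<and> r2 g = c \<cdot>\<^sub>m (A * F (r1 g) * Ai)" using eq bF g unfolding Ai_def by metis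
    then have "\<Phi> (r1 g) (r2 g) \<noteq> 0 \<and> r2 g = \<Phi> (r1 g) (r2 g) \<cdot>\<^sub>m (A * F (r1 g) * Ai)"
      unfolding \<Phi>_def by (rule someI_ex)
    then show ?thesis using bF g unfolding \<chi>_def by simp
  qed
  define Xg where "Xg g = A * b g * Ai" for g
  have Xgc: "Xg g \<in> carrier_mat n n" if "g \<in> carrier P" for g
    using that bc Ac Aic' unfolding Xg_def by auto
  have Xgm: "Xg (g \<otimes>\<^bsub>P\<^esub> h) = Xg g * Xg h" if g: "g \<in> carrier P" and h: "h \<in> carrier P" for g h
  proof -
    have bg: "b g \<in> carrier_mat n n" and bh: "b h \<in> carrier_mat n n" using bc g h by auto
    have "Xg g * Xg h = A * (b g * (Ai * (A * (b h * Ai))))"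
      unfolding Xg_def using Ac Aic' bg bh by (simp add: assoc_mult_mat[of _ n n _ n _ n])
    also have "\<dots> = A * (b g * (b h * Ai))" using canc[of "b h * Ai" n] bh Aic' by simp
    also have "\<dots> = Xg (g \<otimes>\<^bsub>P\<^esub> h)"
      unfolding Xg_def using Ac Aic' bg bh bm g h by (simp add: assoc_mult_mat[of _ n n _ n _ n])
    finally show ?thesis by simp
  qed
  have chim: "\<chi> (g \<otimes>\<^bsub>P\<^esub> h) = \<chi> g * \<chi> h" if g: "g \<in> carrier P" and h: "h \<in> carrier P" for g h
  proof -
    have gh: "g \<otimes>\<^bsub>P\<^esub> h \<in> carrier P" using closed g h by blast
    have "r2 (g \<otimes>\<^bsub>P\<^esub> h) = (\<chi> g \<cdot>\<^sub>m Xg g) * (\<chi> h \<cdot>\<^sub>m Xg h)"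
      using r2m chi g h unfolding Xg_def by metis
    also have "\<dots> = (\<chi> g * \<chi> h) \<cdot>\<^sub>m Xg (g \<otimes>\<^bsub>P\<^esub> h)"
      using Xgc[OF g] Xgc[OF h] Xgm[OF g h]
      by (simp add: mult_smult_assoc_mat[of _ n n _ n] mult_smult_distrib[of _ n n _ n] smult_smult_mat mult.commute)
    finally have e1: "r2 (g \<otimes>\<^bsub>P\<^esub> h) = (\<chi> g * \<chi> h) \<cdot>\<^sub>m Xg (g \<otimes>\<^bsub>P\<^esub> h)" .
    have e2: "r2 (g \<otimes>\<^bsub>P\<^esub> h) = \<chi> (g \<otimes>\<^bsub>P\<^esub> h) \<cdot>\<^sub>m Xg (g \<otimes>\<^bsub>P\<^esub> h)"
      using chi[OF gh] unfolding Xg_def by simp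
    have nz: "Xg (g \<otimes>\<^bsub>P\<^esub> h) \<noteq> 0\<^sub>m n n"
      by (rule GL_nonzero[OF n _ Xgc[OF gh] e2]) (use r2c gh in blast)
    show ?thesis using smult_cancel[OF Xgc[OF gh] nz] e1 e2 by metis
  qed
  have cont: "continuous_map T (discrete_topology UNIV) \<chi>"
    unfolding \<chi>_def by (rule disc_cont2[OF c1 c2])
  have cc: "cont_char P T \<chi>" unfolding cont_char_def using chi chim cont by blast
  have "Ai * r2 g = (\<chi> g \<cdot>\<^sub>m b g) * Ai" if g: "g \<in> carrier P" for g
  proof -
    have bg: "b g \<in> carrier_mat n n" using bc g by auto
    have "Ai * r2 g = Ai * (\<chi> g \<cdot>\<^sub>m (A * (b g * Ai)))"
      using chi[OF g] Ac Aic' bg by (simp add: assoc_mult_mat[of _ n n _ n _ n])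
    also have "\<dots> = \<chi> g \<cdot>\<^sub>m (Ai * (A * (b g * Ai)))"
      using Ac Aic' bg by (simp add: mult_smult_distrib[of _ n n _ n])
    also have "\<dots> = \<chi> g \<cdot>\<^sub>m (b g * Ai)" using canc[of "b g * Ai" n] bg Aic' by simp
    also have "\<dots> = (\<chi> g \<cdot>\<^sub>m b g) * Ai" using bg Aic' by (simp add: mult_smult_assoc_mat[of _ n n _ n])
    finally show ?thesis .
  qed
  then show ?thesis using cc unfolding Ai_def by blast
qed

lemma comp_group_hom:
  assumes "group_hom P G r" "group_hom G H e"
  shows "group_hom P H (\<lambda>g. e (r g))"
proof -
  have "(\<lambda>g. e (r g)) \<in> hom P H"
    using assms by (auto intro!: homI simp: group_hom.hom_closed group_hom.hom_mult)
  then show ?thesis using assms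
    by (auto intro!: group_hom.intro group_hom_axioms.intro simp: group_hom_def)
qed

lemma perf_comp:
  assumes P: "group P" and q: "quasisimple G" and hr: "group_hom P G r" and sr: "r ` carrier P = carrier G"
    and he: "group_hom G H e" and K1: "K1 \<lhd> P" and K2: "K2 \<lhd> P"
    and e1: "(\<lambda>g. e (r g)) ` K1 = (\<lambda>g. e (r g)) ` carrier P"
    and e2: "(\<lambda>g. e (r g)) ` K2 = (\<lambda>g. e (r g)) ` carrier P"
  shows "(\<lambda>g. e (r g)) ` (K1 \<inter> K2) = (\<lambda>g. e (r g)) ` carrier P"
proof -
  let ?f = "\<lambda>g. e (r g)"
  have G: "group G" using q by (simp add: quasisimple_def)
  have H: "group H" using he by (simp add: group_hom_def)
  have hf: "group_hom P H ?f" by (rule comp_group_hom[OF hr he])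
  have Kn: "K1 \<inter> K2 \<lhd> P" by (rule group.normal_subgroup_intersect[OF P K1 K2])
  have Ksub: "subgroup (K1 \<inter> K2) P" using Kn by (rule normal_imp_subgroup)
  have Sf: "subgroup (?f ` (K1 \<inter> K2)) H"
    by (rule group_hom.subgroup_img_is_subgroup[OF hf Ksub])
  define S where "S = {M \<in> carrier G. e M \<in> ?f ` (K1 \<inter> K2)}"
  note em = group_hom.hom_mult[OF he] group_hom.hom_inv[OF he] group_hom.hom_one[OF he] group_hom.hom_closed[OF he]
  note fm = group_hom.hom_mult[OF hf] group_hom.hom_inv[OF hf] group_hom.hom_one[OF hf] group_hom.hom_closed[OF hf]
  have Ssub: "subgroup S G"
  proof (rule group.subgroupI[OF G])
    show "S \<subseteq> carrier G" by (auto simp: S_def)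
    have "\<one>\<^bsub>G\<^esub> \<in> S" using subgroup.one_closed[OF Sf] group.is_monoid[OF G] by (simp add: S_def em)
    then show "S \<noteq> {}" by blast
    fix a b assume a: "a \<in> S" and b: "b \<in> S"
    show "inv\<^bsub>G\<^esub> a \<in> S" using a subgroup.m_inv_closed[OF Sf] group.inv_closed[OF G]
      by (auto simp: S_def em)
    show "a \<otimes>\<^bsub>G\<^esub> b \<in> S" using a b subgroup.m_closed[OF Sf] monoid.m_closed[OF group.is_monoid[OF G]]
      by (auto simp: S_def em)
  qed
  have imG: "e ` carrier G = ?f ` carrier P" using sr by (auto simp: image_image[symmetric])
  have "derived_set G (carrier G) \<subseteq> S"
  proof (safe)
    fix M M' assume M: "M \<in> carrier G" and M': "M' \<in> carrier G"
    have "e M \<in> ?f ` K1" using M imG e1 by blast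
    then obtain x where x: "x \<in> K1" "e M = ?f x" by blast
    have "e M' \<in> ?f ` K2" using M' imG e2 by blast
    then obtain y where y: "y \<in> K2" "e M' = ?f y" by blast
    have xc: "x \<in> carrier P" and yc: "y \<in> carrier P"
      using x y normal_imp_subgroup[OF K1] normal_imp_subgroup[OF K2] subgroup.subset by blast+
    let ?c = "x \<otimes>\<^bsub>P\<^esub> y \<otimes>\<^bsub>P\<^esub> inv\<^bsub>P\<^esub> x \<otimes>\<^bsub>P\<^esub> inv\<^bsub>P\<^esub> y"
    note Pc = group.inv_closed[OF P] monoid.m_closed[OF group.is_monoid[OF P]] monoid.m_assoc[OF group.is_monoid[OF P]]
    have c1: "?c \<in> K1"
    proof -
      have "y \<otimes>\<^bsub>P\<^esub> inv\<^bsub>P\<^esub> x \<otimes>\<^bsub>P\<^esub> inv\<^bsub>P\<^esub> y \<in> K1"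
        using group.normal_invE(2)[OF P K1 yc subgroup.m_inv_closed[OF normal_imp_subgroup[OF K1] x(1)]] .
      then have "x \<otimes>\<^bsub>P\<^esub> (y \<otimes>\<^bsub>P\<^esub> inv\<^bsub>P\<^esub> x \<otimes>\<^bsub>P\<^esub> inv\<^bsub>P\<^esub> y) \<in> K1"
        using subgroup.m_closed[OF normal_imp_subgroup[OF K1] x(1)] by blast
      then show ?thesis using xc yc by (simp add: Pc)
    qed
    have c2: "?c \<in> K2"
    proof -
      have "x \<otimes>\<^bsub>P\<^esub> y \<otimes>\<^bsub>P\<^esub> inv\<^bsub>P\<^esub> x \<in> K2"
        using group.normal_invE(2)[OF P K2 xc y(1)] .
      then show ?thesis
        using subgroup.m_closed[OF normal_imp_subgroup[OF K2]] subgroup.m_inv_closed[OF normal_imp_subgroup[OF K2] y(1)]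
        by blast
    qed
    have "?f ?c = e M \<otimes>\<^bsub>H\<^esub> e M' \<otimes>\<^bsub>H\<^esub> inv\<^bsub>H\<^esub> e M \<otimes>\<^bsub>H\<^esub> inv\<^bsub>H\<^esub> e M'"
      using xc yc x y by (simp add: fm group.inv_closed[OF P] monoid.m_closed[OF group.is_monoid[OF P]])
    also have "\<dots> = e (M \<otimes>\<^bsub>G\<^esub> M' \<otimes>\<^bsub>G\<^esub> inv\<^bsub>G\<^esub> M \<otimes>\<^bsub>G\<^esub> inv\<^bsub>G\<^esub> M')"
      using M M' by (simp add: em group.inv_closed[OF G] monoid.m_closed[OF group.is_monoid[OF G]])
    finally have "e (M \<otimes>\<^bsub>G\<^esub> M' \<otimes>\<^bsub>G\<^esub> inv\<^bsub>G\<^esub> M \<otimes>\<^bsub>G\<^esub> inv\<^bsub>G\<^esub> M') \<in> ?f ` (K1 \<inter> K2)"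
      using c1 c2 by (metis IntI imageI)
    moreover have "M \<otimes>\<^bsub>G\<^esub> M' \<otimes>\<^bsub>G\<^esub> inv\<^bsub>G\<^esub> M \<otimes>\<^bsub>G\<^esub> inv\<^bsub>G\<^esub> M' \<in> carrier G"
      using M M' by (simp add: group.inv_closed[OF G] monoid.m_closed[OF group.is_monoid[OF G]])
    ultimately show "M \<otimes>\<^bsub>G\<^esub> M' \<otimes>\<^bsub>G\<^esub> inv\<^bsub>G\<^esub> M \<otimes>\<^bsub>G\<^esub> inv\<^bsub>G\<^esub> M' \<in> S"
      unfolding S_def by blast
  qed
  then have "S = carrier G" by (rule group.qs_derived_sub[OF G q Ssub])
  then have "e ` carrier G \<subseteq> ?f ` (K1 \<inter> K2)" unfolding S_def by blast
  then have A: "?f ` carrier P \<subseteq> ?f ` (K1 \<inter> K2)" by (simp only: imG)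
  have B: "?f ` (K1 \<inter> K2) \<subseteq> ?f ` carrier P"
    by (rule image_mono) (rule subgroup.subset[OF Ksub])
  show ?thesis by (rule equalityI[OF B A])
qed

lemma rep_group_hom:
  assumes P: "group P" and q: "quasisimple (mat_grp n (r ` carrier P))" and h: "r \<in> hom P (GL n)"
  shows "group_hom P (mat_grp n (r ` carrier P)) r"
proof -
  have "r \<in> hom P (mat_grp n (r ` carrier P))"
    using h by (auto intro!: homI simp: hom_def)
  then show ?thesis using P q
    by (auto intro!: group_hom.intro group_hom_axioms.intro simp: quasisimple_def)
qed

lemma rep_GL: "r \<in> hom P (GL n) \<Longrightarrow> g \<in> carrier P \<Longrightarrow> r g \<in> carrier (GL n)"
  by (auto simp: hom_def)

lemma rep_mult: "r \<in> hom P (GL n) \<Longrightarrow> g \<in> carrier P \<Longrightarrow> h \<in> carrier P \<Longrightarrow> r (g \<otimes>\<^bsub>P\<^esub> h) = r g * r h"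
  by (auto simp: hom_def)

lemma n_pos:
  assumes q: "quasisimple (mat_grp n S)" and S: "S \<subseteq> carrier_mat n n"
  shows "n > 0"
proof (rule ccontr)
  assume "\<not> n > 0"
  then have n0: "n = 0" by simp
  have G: "group (mat_grp n S)" using q by (simp add: quasisimple_def)
  have "group_center (mat_grp n S) \<noteq> carrier (mat_grp n S)"
    by (rule group.qs_center_proper[OF G q])
  moreover have "group_center (mat_grp n S) \<subseteq> carrier (mat_grp n S)" by (auto simp: group_center_def)
  ultimately obtain Y where Y: "Y \<in> S" "Y \<notin> group_center (mat_grp n S)" by auto
  have eq: "A = B" if "A \<in> S" "B \<in> S" for A B
  proof -
    have "A \<in> carrier_mat 0 0" "B \<in> carrier_mat 0 0" using that S n0 by auto
    then show ?thesis by (intro eq_matI) auto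
  qed
  have "Y \<in> group_center (mat_grp n S)"
    using Y(1) eq by (auto simp: group_center_def)
  then show False using Y(2) by simp
qed

lemma from_branch:
  fixes r1 r2 :: "'p \<Rightarrow> 'k::field mat"
  assumes G2: "group (mat_grp n S2)" and pf: "proj_faithful n S2" and n: "n > 0"
    and S2c: "S2 \<subseteq> carrier (GL n)"
    and phi: "\<forall>g\<in>carrier P. \<phi> (group_center (mat_grp n1 S1) #>\<^bsub>mat_grp n1 S1\<^esub> r1 g)
                   = group_center (mat_grp n S2) #>\<^bsub>mat_grp n S2\<^esub> r2 g"
    and r1S: "\<forall>g\<in>carrier P. r1 g \<in> S1" and r2S: "\<forall>g\<in>carrier P. r2 g \<in> S2"
    and br: "\<forall>M\<in>S1. \<exists>Y\<in>S2. \<exists>c. c \<noteq> 0 \<and>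
               \<phi> (group_center (mat_grp n1 S1) #>\<^bsub>mat_grp n1 S1\<^esub> M)
                 = group_center (mat_grp n S2) #>\<^bsub>mat_grp n S2\<^esub> Y \<and> Y = c \<cdot>\<^sub>m W M"
    and Wc: "\<forall>M\<in>S1. W M \<in> carrier_mat n n"
  shows "\<forall>g\<in>carrier P. \<exists>c. c \<noteq> 0 \<and> r2 g = c \<cdot>\<^sub>m W (r1 g)"
proof
  fix g assume g: "g \<in> carrier P"
  let ?Z = "group_center (mat_grp n S2)"
  have M: "r1 g \<in> S1" using r1S g by blast
  obtain Y c where Y: "Y \<in> S2" "c \<noteq> 0"
    "\<phi> (group_center (mat_grp n1 S1) #>\<^bsub>mat_grp n1 S1\<^esub> r1 g) = ?Z #>\<^bsub>mat_grp n S2\<^esub> Y"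
    "Y = c \<cdot>\<^sub>m W (r1 g)" using br M by blast
  have e: "?Z #>\<^bsub>mat_grp n S2\<^esub> r2 g = ?Z #>\<^bsub>mat_grp n S2\<^esub> Y" using phi g Y(3) by simp
  have Zs: "subgroup ?Z (mat_grp n S2)" by (rule group.center_subgroup[OF G2])
  have "r2 g \<in> ?Z #>\<^bsub>mat_grp n S2\<^esub> r2 g"
    using group.rcos_self[OF G2 _ Zs] r2S g by simp
  then have "r2 g \<in> ?Z #>\<^bsub>mat_grp n S2\<^esub> Y" using e by simp
  then obtain z where z: "z \<in> ?Z" "r2 g = z * Y" unfolding r_coset_def by auto
  have zS: "z \<in> S2" using z(1) by (auto simp: group_center_def)
  then obtain d where d: "z = d \<cdot>\<^sub>m 1\<^sub>m n" using pf z(1) by (auto simp: proj_faithful_def)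
  have zGL: "z \<in> carrier (GL n)" using zS S2c by blast
  have d0: "d \<noteq> 0"
  proof
    assume "d = 0"
    then have "z = 1 \<cdot>\<^sub>m 0\<^sub>m n n" using d by (intro eq_matI) auto
    from GL_nonzero[OF n zGL _ this] show False by simp
  qed
  have Wg: "W (r1 g) \<in> carrier_mat n n" using Wc M by blast
  have "r2 g = (d \<cdot>\<^sub>m 1\<^sub>m n) * (c \<cdot>\<^sub>m W (r1 g))" using z d Y(4) by simp
  also have "\<dots> = (d * c) \<cdot>\<^sub>m W (r1 g)"
    using Wg by (simp add: mult_smult_assoc_mat[of _ n n _ n] mult_smult_distrib[of _ n n _ n] smult_smult_mat mult.commute)
  finally have "r2 g = (d * c) \<cdot>\<^sub>m W (r1 g)" .
  moreover have "d * c \<noteq> 0" using d0 Y(2) by simp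
  ultimately show "\<exists>c. c \<noteq> 0 \<and> r2 g = c \<cdot>\<^sub>m W (r1 g)" by blast
qed

lemma pairwise:
  fixes P :: "'p monoid" and T :: "'p topology"
    and r1 r2 :: "'p \<Rightarrow> 'k::{finite,field} mat" and e1 e2 :: "'k mat \<Rightarrow> 'f::field mat"
  assumes top: "topological_group P T"
    and rep1: "cont_rep P T n1 r1" and rep2: "cont_rep P T n2 r2"
    and eh1: "e1 \<in> hom (mat_grp n1 (r1 ` carrier P)) (GL m1)"
    and eh2: "e2 \<in> hom (mat_grp n2 (r2 ` carrier P)) (GL m2)"
    and q1: "quasisimple (mat_grp n1 (r1 ` carrier P))"
    and q2: "quasisimple (mat_grp n2 (r2 ` carrier P))"
    and ga: "goursat_adapted n1 (r1 ` carrier P) n2 (r2 ` carrier P)"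
    and nt: "\<not> (\<exists>\<chi> s A. cont_char P T \<chi> \<and> field_aut s \<and> n2 = n1 \<and> A \<in> carrier (GL n2) \<and>
              (\<forall>g\<in>carrier P. A * r2 g = (\<chi> g \<cdot>\<^sub>m map_mat s (r1 g)) * A))"
    and nd: "\<not> (\<exists>\<chi> s A. cont_char P T \<chi> \<and> field_aut s \<and> n2 = n1 \<and> A \<in> carrier (GL n2) \<and>
              (\<forall>g\<in>carrier P. A * r2 g =
                  (\<chi> g \<cdot>\<^sub>m transpose_mat (inv\<^bsub>GL n1\<^esub> (map_mat s (r1 g)))) * A))"
  shows "(\<lambda>g. e1 (r1 g)) ` kernel P (GL m2) (\<lambda>g. e2 (r2 g)) = (\<lambda>g. e1 (r1 g)) ` carrier P"
proof (rule ccontr)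
  let ?G1 = "mat_grp n1 (r1 ` carrier P)" and ?G2 = "mat_grp n2 (r2 ` carrier P)"
  let ?f1 = "\<lambda>g. e1 (r1 g)" and ?f2 = "\<lambda>g. e2 (r2 g)"
  let ?K1 = "kernel P (GL m1) ?f1" and ?K2 = "kernel P (GL m2) ?f2"
  let ?Z1 = "group_center ?G1" and ?Z2 = "group_center ?G2"
  assume A0: "?f1 ` ?K2 \<noteq> ?f1 ` carrier P"
  have P: "group P" and topT: "topspace T = carrier P" using top by (auto simp: topological_group_def)
  have rh1: "r1 \<in> hom P (GL n1)" and cr1: "continuous_map T (discrete_topology UNIV) r1"
    using rep1 by (auto simp: cont_rep_def)
  have rh2: "r2 \<in> hom P (GL n2)" and cr2: "continuous_map T (discrete_topology UNIV) r2"
    using rep2 by (auto simp: cont_rep_def)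
  have h1: "group_hom P ?G1 r1" by (rule rep_group_hom[OF P q1 rh1])
  have h2: "group_hom P ?G2 r2" by (rule rep_group_hom[OF P q2 rh2])
  have G1: "group ?G1" and G2: "group ?G2" using q1 q2 by (auto simp: quasisimple_def)
  have he1: "group_hom ?G1 (GL m1) e1"
    using G1 GL_group eh1 by (auto intro!: group_hom.intro group_hom_axioms.intro)
  have he2: "group_hom ?G2 (GL m2) e2"
    using G2 GL_group eh2 by (auto intro!: group_hom.intro group_hom_axioms.intro)
  have hf1: "group_hom P (GL m1) ?f1" by (rule comp_group_hom[OF h1 he1])
  have GLm1: "group (GL m1 :: 'f mat monoid)" by (rule GL_group)
  have hf2: "group_hom P (GL m2) ?f2" by (rule comp_group_hom[OF h2 he2])
  have Kn1: "?K1 \<lhd> P" by (rule group_hom.normal_kernel[OF hf1])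
  have Kn2: "?K2 \<lhd> P" by (rule group_hom.normal_kernel[OF hf2])
  have s1: "r1 ` carrier P = carrier ?G1" and s2: "r2 ` carrier P = carrier ?G2" by simp_all
  have kr1: "kernel P ?G1 r1 \<subseteq> ?K1"
  proof
    fix g assume "g \<in> kernel P ?G1 r1"
    then have g: "g \<in> carrier P" "r1 g = \<one>\<^bsub>?G1\<^esub>" by (auto simp: kernel_def)
    then have "?f1 g = \<one>\<^bsub>GL m1\<^esub>" using group_hom.hom_one[OF he1] by simp
    then show "g \<in> ?K1" using g by (simp add: kernel_def)
  qed
  have kr2: "kernel P ?G2 r2 \<subseteq> ?K2"
  proof
    fix g assume "g \<in> kernel P ?G2 r2"
    then have g: "g \<in> carrier P" "r2 g = \<one>\<^bsub>?G2\<^esub>" by (auto simp: kernel_def)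
    then have "?f2 g = \<one>\<^bsub>GL m2\<^esub>" using group_hom.hom_one[OF he2] by simp
    then show "g \<in> ?K2" using g by (simp add: kernel_def)
  qed
  have K1sub: "?K1 \<subseteq> carrier P" and K2sub: "?K2 \<subseteq> carrier P" by (auto simp: kernel_def)
  have trick: "?f1 ` ?K2 = ?f1 ` carrier P" if eqB: "?f2 ` ?K1 = ?f2 ` carrier P"
  proof (rule equalityI)
    show "?f1 ` ?K2 \<subseteq> ?f1 ` carrier P" using K2sub by (rule image_mono)
    show "?f1 ` carrier P \<subseteq> ?f1 ` ?K2"
    proof
      fix a assume "a \<in> ?f1 ` carrier P"
      then obtain x where x: "x \<in> carrier P" "a = ?f1 x" by blast
      have "?f2 x \<in> ?f2 ` ?K1" using eqB x by blast
      then obtain h where h: "h \<in> ?K1" "?f2 x = ?f2 h" by blast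
      have hc: "h \<in> carrier P" using h K1sub by blast
      have h1: "?f1 h = \<one>\<^bsub>GL m1\<^esub>" using h by (simp add: kernel_def)
      let ?y = "x \<otimes>\<^bsub>P\<^esub> inv\<^bsub>P\<^esub> h"
      have yc: "?y \<in> carrier P" using x hc P by (simp add: group.inv_closed monoid.m_closed group.is_monoid)
      have "?f1 ?y = ?f1 x \<otimes>\<^bsub>GL m1\<^esub> inv\<^bsub>GL m1\<^esub> (?f1 h)"
        using group_hom.hom_mult[OF hf1 x(1) group.inv_closed[OF P hc]] group_hom.hom_inv[OF hf1 hc] by simp
      also have "\<dots> = ?f1 x" using h1 monoid.inv_one[OF group.is_monoid[OF GLm1]]
          monoid.r_one[OF group.is_monoid[OF GLm1] group_hom.hom_closed[OF hf1 x(1)]]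
        by (simp del: GL_mult GL_one)
      finally have fy1: "?f1 ?y = a" using x by simp
      have "?f2 ?y = ?f2 x \<otimes>\<^bsub>GL m2\<^esub> inv\<^bsub>GL m2\<^esub> (?f2 h)"
        using group_hom.hom_mult[OF hf2 x(1) group.inv_closed[OF P hc]] group_hom.hom_inv[OF hf2 hc] by simp
      also have "\<dots> = \<one>\<^bsub>GL m2\<^esub>" using h(2) group.r_inv[OF GL_group group_hom.hom_closed[OF hf2 hc]]
        by (simp del: GL_mult GL_one)
      finally have "?y \<in> ?K2" using yc by (simp add: kernel_def)
      then show "a \<in> ?f1 ` ?K2" using fy1 by blast
    qed
  qed
  have c2: "r1 ` ?K2 \<subseteq> ?Z1"
  proof -
    have "r1 ` ?K2 \<lhd> ?G1" by (rule normal.surj_hom_normal_subgroup[OF Kn2 h1 s1])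
    then have "r1 ` ?K2 \<subseteq> ?Z1 \<or> r1 ` ?K2 = carrier ?G1" by (rule group.qs_normal[OF G1 q1])
    moreover have "r1 ` ?K2 \<noteq> carrier ?G1"
    proof
      assume "r1 ` ?K2 = carrier ?G1"
      then have "e1 ` (r1 ` ?K2) = e1 ` (r1 ` carrier P)" by simp
      then have "?f1 ` ?K2 = ?f1 ` carrier P" by (simp add: image_image)
      then show False using A0 by simp
    qed
    ultimately show ?thesis by blast
  qed
  have B: "?f2 ` ?K1 \<noteq> ?f2 ` carrier P" using trick A0 by blast
  have c1: "r2 ` ?K1 \<subseteq> ?Z2"
  proof -
    have "r2 ` ?K1 \<lhd> ?G2" by (rule normal.surj_hom_normal_subgroup[OF Kn1 h2 s2])
    then have "r2 ` ?K1 \<subseteq> ?Z2 \<or> r2 ` ?K1 = carrier ?G2" by (rule group.qs_normal[OF G2 q2])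
    moreover have "r2 ` ?K1 \<noteq> carrier ?G2"
    proof
      assume "r2 ` ?K1 = carrier ?G2"
      then have "e2 ` (r2 ` ?K1) = e2 ` (r2 ` carrier P)" by simp
      then have "?f2 ` ?K1 = ?f2 ` carrier P" by (simp add: image_image)
      then show False using B by simp
    qed
    ultimately show ?thesis by blast
  qed
  obtain \<phi> where phiI: "\<phi> \<in> iso (?G1 Mod ?Z1) (?G2 Mod ?Z2)"
    and phi: "\<forall>g\<in>carrier P. \<phi> (?Z1 #>\<^bsub>?G1\<^esub> r1 g) = ?Z2 #>\<^bsub>?G2\<^esub> r2 g"
    using goursat_iso[OF P q1 q2 h1 h2 s1 s2 kr1 c1 kr2 c2] by blast
  have pf2: "proj_faithful n2 (r2 ` carrier P)" using ga by (simp add: goursat_adapted_def)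
  obtain s A where fa: "field_aut s" and n12: "n1 = n2" and A: "A \<in> carrier (GL n2)"
    and br: "(\<forall>M\<in>r1 ` carrier P. \<exists>Y\<in>r2 ` carrier P. \<exists>c. c \<noteq> 0 \<and>
               \<phi> (?Z1 #>\<^bsub>?G1\<^esub> M) = ?Z2 #>\<^bsub>?G2\<^esub> Y
             \<and> Y = c \<cdot>\<^sub>m (A * map_mat s M * inv\<^bsub>GL n2\<^esub> A))
           \<or>
            (\<forall>M\<in>r1 ` carrier P. \<exists>Y\<in>r2 ` carrier P. \<exists>c. c \<noteq> 0 \<and>
               \<phi> (?Z1 #>\<^bsub>?G1\<^esub> M) = ?Z2 #>\<^bsub>?G2\<^esub> Y
             \<and> Y = c \<cdot>\<^sub>m (A * transpose_mat (inv\<^bsub>GL n1\<^esub> (map_mat s M)) * inv\<^bsub>GL n2\<^esub> A))"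
    using ga phiI unfolding goursat_adapted_def by blast
  have r1c: "\<forall>g\<in>carrier P. r1 g \<in> carrier (GL n2)" using rh1 n12 by (auto simp: hom_def)
  have r2c: "\<forall>g\<in>carrier P. r2 g \<in> carrier (GL n2)" using rh2 by (auto simp: hom_def)
  have r1m: "\<forall>g\<in>carrier P. \<forall>h\<in>carrier P. r1 (g \<otimes>\<^bsub>P\<^esub> h) = r1 g * r1 h" using rh1 by (auto simp: hom_def)
  have r2m: "\<forall>g\<in>carrier P. \<forall>h\<in>carrier P. r2 (g \<otimes>\<^bsub>P\<^esub> h) = r2 g * r2 h" using rh2 by (auto simp: hom_def)
  have closed: "\<forall>g\<in>carrier P. \<forall>h\<in>carrier P. g \<otimes>\<^bsub>P\<^esub> h \<in> carrier P"
    using P by (simp add: monoid.m_closed group.is_monoid)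
  have S2c: "r2 ` carrier P \<subseteq> carrier (GL n2)" using r2c by blast
  have npos: "n2 > 0" using n_pos[OF q2] S2c by (auto simp: GL_carrier)
  have GLg: "group (GL n2 :: 'k mat monoid)" by (rule GL_group)
  have Ai: "inv\<^bsub>GL n2\<^esub> A \<in> carrier (GL n2)" by (rule group.inv_closed[OF GLg A])
  have Ac: "A \<in> carrier_mat n2 n2" and Aic: "inv\<^bsub>GL n2\<^esub> A \<in> carrier_mat n2 n2"
    using A Ai by (auto simp: GL_carrier)
  have r1S: "\<forall>g\<in>carrier P. r1 g \<in> r1 ` carrier P" by blast
  have r2S: "\<forall>g\<in>carrier P. r2 g \<in> r2 ` carrier P" by blast
  have r1cm: "\<forall>g\<in>carrier P. r1 g \<in> carrier_mat n2 n2" using r1c by (auto simp: GL_carrier)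
  from br show False
  proof
    assume br1: "\<forall>M\<in>r1 ` carrier P. \<exists>Y\<in>r2 ` carrier P. \<exists>c. c \<noteq> 0 \<and>
               \<phi> (?Z1 #>\<^bsub>?G1\<^esub> M) = ?Z2 #>\<^bsub>?G2\<^esub> Y
             \<and> Y = c \<cdot>\<^sub>m (A * map_mat s M * inv\<^bsub>GL n2\<^esub> A)"
    have Wc: "\<forall>M\<in>r1 ` carrier P. A * map_mat s M * inv\<^bsub>GL n2\<^esub> A \<in> carrier_mat n2 n2"
      using r1cm Ac Aic by auto
    have eq: "\<forall>g\<in>carrier P. \<exists>c. c \<noteq> 0 \<and> r2 g = c \<cdot>\<^sub>m (A * map_mat s (r1 g) * inv\<^bsub>GL n2\<^esub> A)"
      by (rule from_branch[OF G2 pf2 npos S2c phi r1S r2S br1 Wc])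
    have bm: "\<forall>g\<in>carrier P. \<forall>h\<in>carrier P. map_mat s (r1 (g \<otimes>\<^bsub>P\<^esub> h)) = map_mat s (r1 g) * map_mat s (r1 h)"
      using r1m r1cm map_mat_mult[OF fa] by (metis (no_types, lifting))
    have bc: "\<forall>g\<in>carrier P. map_mat s (r1 g) \<in> carrier_mat n2 n2" using r1cm by auto
    obtain \<chi> where chi: "cont_char P T \<chi>"
      and e: "\<forall>g\<in>carrier P. inv\<^bsub>GL n2\<^esub> A * r2 g = (\<chi> g \<cdot>\<^sub>m map_mat s (r1 g)) * inv\<^bsub>GL n2\<^esub> A"
      using twist[OF npos A topT r2c bc closed r2m bm _ cr1 cr2 eq, of "map_mat s"] by auto
    show False using nt chi fa n12 Ai e by blast
  next
    assume br2: "\<forall>M\<in>r1 ` carrier P. \<exists>Y\<in>r2 ` carrier P. \<exists>c. c \<noteq> 0 \<and>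
               \<phi> (?Z1 #>\<^bsub>?G1\<^esub> M) = ?Z2 #>\<^bsub>?G2\<^esub> Y
             \<and> Y = c \<cdot>\<^sub>m (A * transpose_mat (inv\<^bsub>GL n1\<^esub> (map_mat s M)) * inv\<^bsub>GL n2\<^esub> A)"
    define F where "F M = transpose_mat (inv\<^bsub>GL n1\<^esub> (map_mat s M))" for M
    have sGL: "\<forall>g\<in>carrier P. map_mat s (r1 g) \<in> carrier (GL n2)" using r1c map_mat_GL[OF fa] by blast
    have Fc: "\<forall>g\<in>carrier P. F (r1 g) \<in> carrier_mat n2 n2"
    proof
      fix g assume g: "g \<in> carrier P"
      have "inv\<^bsub>GL n2\<^esub> (map_mat s (r1 g)) \<in> carrier (GL n2)" using group.inv_closed[OF GLg] sGL g by blast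
      then show "F (r1 g) \<in> carrier_mat n2 n2" unfolding F_def n12 by (auto simp: GL_carrier)
    qed
    have Wc: "\<forall>M\<in>r1 ` carrier P. A * F M * inv\<^bsub>GL n2\<^esub> A \<in> carrier_mat n2 n2"
      using Fc Ac Aic by auto
    have eq: "\<forall>g\<in>carrier P. \<exists>c. c \<noteq> 0 \<and> r2 g = c \<cdot>\<^sub>m (A * F (r1 g) * inv\<^bsub>GL n2\<^esub> A)"
      unfolding F_def by (rule from_branch[OF G2 pf2 npos S2c phi r1S r2S br2 Wc[unfolded F_def]])
    have bm: "\<forall>g\<in>carrier P. \<forall>h\<in>carrier P. F (r1 (g \<otimes>\<^bsub>P\<^esub> h)) = F (r1 g) * F (r1 h)"
    proof (intro ballI)
      fix g h assume g: "g \<in> carrier P" and h: "h \<in> carrier P"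
      let ?a = "map_mat s (r1 g)" and ?b = "map_mat s (r1 h)"
      have a: "?a \<in> carrier (GL n2)" and b: "?b \<in> carrier (GL n2)" using sGL g h by auto
      have ia: "inv\<^bsub>GL n2\<^esub> ?a \<in> carrier_mat n2 n2" and ib: "inv\<^bsub>GL n2\<^esub> ?b \<in> carrier_mat n2 n2"
        using group.inv_closed[OF GLg a] group.inv_closed[OF GLg b] by (auto simp: GL_carrier)
      have "map_mat s (r1 (g \<otimes>\<^bsub>P\<^esub> h)) = ?a * ?b"
        using r1m r1cm map_mat_mult[OF fa] g h by (metis (no_types, lifting))
      then have "inv\<^bsub>GL n2\<^esub> (map_mat s (r1 (g \<otimes>\<^bsub>P\<^esub> h))) = inv\<^bsub>GL n2\<^esub> ?b * inv\<^bsub>GL n2\<^esub> ?a"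
        using group.inv_mult_group[OF GLg a b] by simp
      then show "F (r1 (g \<otimes>\<^bsub>P\<^esub> h)) = F (r1 g) * F (r1 h)"
        unfolding F_def n12 using transpose_mult[OF ib ia] by simp
    qed
    obtain \<chi> where chi: "cont_char P T \<chi>"
      and e: "\<forall>g\<in>carrier P. inv\<^bsub>GL n2\<^esub> A * r2 g = (\<chi> g \<cdot>\<^sub>m F (r1 g)) * inv\<^bsub>GL n2\<^esub> A"
      using twist[OF npos A topT r2c Fc closed r2m bm _ cr1 cr2 eq, of F] by auto
    show False using nd chi fa n12 Ai e unfolding F_def by blast
  qed
qed

theorem proposition4p11:
  fixes P :: "'p monoid" and T :: "'p topology"
    and N :: nat and n :: "nat \<Rightarrow> nat" and m :: "nat \<Rightarrow> nat"
    and rho :: "nat \<Rightarrow> 'p \<Rightarrow> 'k::{finite,field} mat"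
    and eta :: "nat \<Rightarrow> 'k mat \<Rightarrow> 'f::field mat"
  assumes top: "topological_group P T"
    and reps: "\<forall>i<N. cont_rep P T (n i) (rho i)"
    and eta_hom: "\<forall>i<N. eta i \<in> hom (mat_grp (n i) (rho i ` carrier P)) (GL (m i))"
    and eta_nontriv: "\<forall>i<N. \<exists>M\<in>rho i ` carrier P. eta i M \<noteq> 1\<^sub>m (m i)"
    and quasi: "\<forall>i<N. quasisimple (mat_grp (n i) (rho i ` carrier P))"
    and goursat: "\<forall>i<N. \<forall>j<N. i \<noteq> j \<longrightarrow>
                    goursat_adapted (n i) (rho i ` carrier P) (n j) (rho j ` carrier P)"
    and no_twist: "\<forall>i<N. \<forall>j<N. i \<noteq> j \<longrightarrow>
       \<not> (\<exists>\<chi> s A. cont_char P T \<chi> \<and> field_aut s \<and> n i = n j \<and> A \<in> carrier (GL (n i)) \<and>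
              (\<forall>g\<in>carrier P. A * rho i g = (\<chi> g \<cdot>\<^sub>m map_mat s (rho j g)) * A))"
    and no_dual_twist: "\<forall>i<N. \<forall>j<N. i \<noteq> j \<longrightarrow>
       \<not> (\<exists>\<chi> s A. cont_char P T \<chi> \<and> field_aut s \<and> n i = n j \<and> A \<in> carrier (GL (n i)) \<and>
              (\<forall>g\<in>carrier P. A * rho i g =
                  (\<chi> g \<cdot>\<^sub>m transpose_mat (inv\<^bsub>GL (n j)\<^esub> (map_mat s (rho j g)))) * A))"
  shows "(\<lambda>g. \<lambda>i\<in>{..<N}. eta i (rho i g)) ` carrier P
           = (\<Pi>\<^sub>E i\<in>{..<N}. eta i ` rho i ` carrier P)"
proof -
  have P: "group P" using top by (simp add: topological_group_def)
  let ?f = "\<lambda>i g. eta i (rho i g)"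
  have hf: "\<forall>i\<in>{..<N}. group_hom P (GL (m i)) (?f i)"
  proof
    fix i assume i: "i \<in> {..<N}"
    have rh: "rho i \<in> hom P (GL (n i))" using reps i by (auto simp: cont_rep_def)
    have q: "quasisimple (mat_grp (n i) (rho i ` carrier P))" using quasi i by auto
    have h: "group_hom P (mat_grp (n i) (rho i ` carrier P)) (rho i)" by (rule rep_group_hom[OF P q rh])
    have he: "group_hom (mat_grp (n i) (rho i ` carrier P)) (GL (m i)) (eta i)"
      using q GL_group eta_hom i by (auto intro!: group_hom.intro group_hom_axioms.intro simp: quasisimple_def)
    show "group_hom P (GL (m i)) (?f i)" by (rule comp_group_hom[OF h he])
  qed
  have pair: "\<forall>i\<in>{..<N}. \<forall>j\<in>{..<N}. i \<noteq> j \<longrightarrow>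
      ?f i ` kernel P (GL (m j)) (?f j) = ?f i ` carrier P"
  proof (intro ballI impI)
    fix i j assume i: "i \<in> {..<N}" and j: "j \<in> {..<N}" and ij: "i \<noteq> j"
    show "?f i ` kernel P (GL (m j)) (?f j) = ?f i ` carrier P"
    proof (rule pairwise[OF top])
      show "cont_rep P T (n i) (rho i)" "cont_rep P T (n j) (rho j)" using reps i j by auto
      show "eta i \<in> hom (mat_grp (n i) (rho i ` carrier P)) (GL (m i))"
        "eta j \<in> hom (mat_grp (n j) (rho j ` carrier P)) (GL (m j))" using eta_hom i j by auto
      show "quasisimple (mat_grp (n i) (rho i ` carrier P))" "quasisimple (mat_grp (n j) (rho j ` carrier P))"
        using quasi i j by auto
      show "goursat_adapted (n i) (rho i ` carrier P) (n j) (rho j ` carrier P)" using goursat i j ij by auto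
      show "\<not> (\<exists>\<chi> s A. cont_char P T \<chi> \<and> field_aut s \<and> n j = n i \<and> A \<in> carrier (GL (n j)) \<and>
              (\<forall>g\<in>carrier P. A * rho j g = (\<chi> g \<cdot>\<^sub>m map_mat s (rho i g)) * A))"
        using no_twist i j ij by auto
      show "\<not> (\<exists>\<chi> s A. cont_char P T \<chi> \<and> field_aut s \<and> n j = n i \<and> A \<in> carrier (GL (n j)) \<and>
              (\<forall>g\<in>carrier P. A * rho j g =
                  (\<chi> g \<cdot>\<^sub>m transpose_mat (inv\<^bsub>GL (n i)\<^esub> (map_mat s (rho i g)))) * A))"
        using no_dual_twist i j ij by auto
    qed
  qed
  have perf: "\<forall>j\<in>{..<N}. \<forall>K1 K2. K1 \<lhd> P \<longrightarrow> K2 \<lhd> P \<longrightarrow> ?f j ` K1 = ?f j ` carrier P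
                 \<longrightarrow> ?f j ` K2 = ?f j ` carrier P \<longrightarrow> ?f j ` (K1 \<inter> K2) = ?f j ` carrier P"
  proof (intro ballI allI impI)
    fix j K1 K2 assume j: "j \<in> {..<N}" and K1: "K1 \<lhd> P" and K2: "K2 \<lhd> P"
      and e1: "?f j ` K1 = ?f j ` carrier P" and e2: "?f j ` K2 = ?f j ` carrier P"
    have rh: "rho j \<in> hom P (GL (n j))" using reps j by (auto simp: cont_rep_def)
    have q: "quasisimple (mat_grp (n j) (rho j ` carrier P))" using quasi j by auto
    have h: "group_hom P (mat_grp (n j) (rho j ` carrier P)) (rho j)" by (rule rep_group_hom[OF P q rh])
    have he: "group_hom (mat_grp (n j) (rho j ` carrier P)) (GL (m j)) (eta j)"
      using q GL_group eta_hom j by (auto intro!: group_hom.intro group_hom_axioms.intro simp: quasisimple_def)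
    show "?f j ` (K1 \<inter> K2) = ?f j ` carrier P"
      by (rule perf_comp[OF P q h _ he K1 K2 e1 e2]) simp
  qed
  show ?thesis
  proof (rule equalityI)
    show "(\<lambda>g. \<lambda>i\<in>{..<N}. eta i (rho i g)) ` carrier P \<subseteq> (\<Pi>\<^sub>E i\<in>{..<N}. eta i ` rho i ` carrier P)"
      by (auto simp: PiE_iff)
  next
    show "(\<Pi>\<^sub>E i\<in>{..<N}. eta i ` rho i ` carrier P) \<subseteq> (\<lambda>g. \<lambda>i\<in>{..<N}. eta i (rho i g)) ` carrier P"
    proof
      fix a assume a: "a \<in> (\<Pi>\<^sub>E i\<in>{..<N}. eta i ` rho i ` carrier P)"
      have a': "\<forall>i\<in>{..<N}. a i \<in> ?f i ` carrier P" using a by (auto simp: PiE_iff image_image)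
      obtain g where g: "g \<in> carrier P" "\<forall>i\<in>{..<N}. ?f i g = a i"
        using ribet[OF P _ hf pair perf a'] by blast
      have "a = (\<lambda>i\<in>{..<N}. eta i (rho i g))"
        using a g by (auto simp: PiE_iff extensional_def fun_eq_iff)
      then show "a \<in> (\<lambda>g. \<lambda>i\<in>{..<N}. eta i (rho i g)) ` carrier P" using g by blast
    qed
  qed
qed

end
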